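(* Let $X_n=(\mathbb{C}^n,\|\cdot\|)$ be a Banach lattice and $J\subset\mathbb{N}_0^n$ a finite index set. Then $\boldsymbol{\lambda}\big(\mathcal{P}_J(X_n)\big)\le\widehat{\boldsymbol{\lambda}}\big(\mathcal{P}_J(X_n)\big)$.
   Context: A Banach lattice $X_n=(\mathbb{C}^n,\|\cdot\|)$ is a norm with $\|z\|\le\|w\|$ whenever $|z_k|\le|w_k|$ for all $k$. $\mathcal{P}_J(X_n)$ is the space of polynomials $\sum_{\alpha\in J}c_\alpha z^\alpha$ with norm $\sup_{z\in B_{X_n}}|P(z)|$, $B_{X_n}$ the open unit ball. $\boldsymbol{\lambda}(E)$ is the projection constant: supremum over Banach spaces $Y$ and isometric embeddings $I:E\to Y$ of the infimum of norms of projections from $Y$ onto $I(E)$. $c_{X_n}(\alpha)=1/\sup_{z\in B_{X_n}}|z^\alpha|$ and $\widehat{\boldsymbol{\lambda}}(\mathcal{P}_J(X_n))=\sup_{z\in B_{X_n}}\sum_{\alpha\in J}c_{X_n}(\alpha)|z^\alpha|$. *)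

theory Defs
  imports "HOL-Analysis.Analysis"
begin

text \<open>The space C^n is modelled as functions 'n => complex for a finite index type 'n
  (so n = CARD('n)); multi-indices alpha in N_0^n are functions 'n => nat.\<close>

definition mono_pow :: "('n::finite \<Rightarrow> complex) \<Rightarrow> ('n \<Rightarrow> nat) \<Rightarrow> complex" where
  "mono_pow z \<alpha> = (\<Prod>i\<in>UNIV. z i ^ \<alpha> i)"

text \<open>A Banach lattice norm on C^n (completeness is automatic in finite dimension).\<close>
definition is_lattice_norm :: "(('n::finite \<Rightarrow> complex) \<Rightarrow> real) \<Rightarrow> bool" where
  "is_lattice_norm N \<longleftrightarrow>
     (\<forall>z. N z = 0 \<longleftrightarrow> z = (\<lambda>_. 0)) \<and>
     (\<forall>c z. N (\<lambda>i. c * z i) = cmod c * N z) \<and>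
     (\<forall>z w. N (\<lambda>i. z i + w i) \<le> N z + N w) \<and>
     (\<forall>z w. (\<forall>k. cmod (z k) \<le> cmod (w k)) \<longrightarrow> N z \<le> N w)"

definition unit_ball :: "(('n::finite \<Rightarrow> complex) \<Rightarrow> real) \<Rightarrow> ('n \<Rightarrow> complex) set" where
  "unit_ball N = {z. N z < 1}"

text \<open>Polynomials in P_J(X_n), represented by coefficient functions supported in J.\<close>
definition PJ :: "('n \<Rightarrow> nat) set \<Rightarrow> (('n \<Rightarrow> nat) \<Rightarrow> complex) set" where
  "PJ J = {c. \<forall>\<alpha>. \<alpha> \<notin> J \<longrightarrow> c \<alpha> = 0}"

definition poly_norm ::
  "(('n::finite \<Rightarrow> complex) \<Rightarrow> real) \<Rightarrow> ('n \<Rightarrow> nat) set \<Rightarrow> (('n \<Rightarrow> nat) \<Rightarrow> complex) \<Rightarrow> real" where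
  "poly_norm N J c = (SUP z\<in>unit_ball N. cmod (\<Sum>\<alpha>\<in>J. c \<alpha> * mono_pow z \<alpha>))"

definition cX :: "(('n::finite \<Rightarrow> complex) \<Rightarrow> real) \<Rightarrow> ('n \<Rightarrow> nat) \<Rightarrow> real" where
  "cX N \<alpha> = 1 / (SUP z\<in>unit_ball N. cmod (mono_pow z \<alpha>))"

definition lambda_hat :: "(('n::finite \<Rightarrow> complex) \<Rightarrow> real) \<Rightarrow> ('n \<Rightarrow> nat) set \<Rightarrow> real" where
  "lambda_hat N J = (SUP z\<in>unit_ball N. \<Sum>\<alpha>\<in>J. cX N \<alpha> * cmod (mono_pow z \<alpha>))"

text \<open>A complex Banach space: a real Banach space 'b together with a complex scalar
  multiplication extending the real one and compatible with the norm.\<close>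
definition complex_banach_structure :: "(complex \<Rightarrow> 'b::banach \<Rightarrow> 'b) \<Rightarrow> bool" where
  "complex_banach_structure smul \<longleftrightarrow>
     (\<forall>r y. smul (complex_of_real r) y = r *\<^sub>R y) \<and>
     (\<forall>a b y. smul (a * b) y = smul a (smul b y)) \<and>
     (\<forall>a x y. smul a (x + y) = smul a x + smul a y) \<and>
     (\<forall>a b y. smul (a + b) y = smul a y + smul b y) \<and>
     (\<forall>a y. norm (smul a y) = cmod a * norm y)"

definition isometric_embedding ::
  "(('n::finite \<Rightarrow> complex) \<Rightarrow> real) \<Rightarrow> ('n \<Rightarrow> nat) set \<Rightarrow> (complex \<Rightarrow> 'b::banach \<Rightarrow> 'b)
     \<Rightarrow> ((('n \<Rightarrow> nat) \<Rightarrow> complex) \<Rightarrow> 'b) \<Rightarrow> bool" where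
  "isometric_embedding N J smul I \<longleftrightarrow>
     (\<forall>c\<in>PJ J. \<forall>d\<in>PJ J. I (\<lambda>\<alpha>. c \<alpha> + d \<alpha>) = I c + I d) \<and>
     (\<forall>a. \<forall>c\<in>PJ J. I (\<lambda>\<alpha>. a * c \<alpha>) = smul a (I c)) \<and>
     (\<forall>c\<in>PJ J. norm (I c) = poly_norm N J c)"

definition projections_onto :: "(complex \<Rightarrow> 'b::banach \<Rightarrow> 'b) \<Rightarrow> 'b set \<Rightarrow> ('b \<Rightarrow> 'b) set" where
  "projections_onto smul V =
     {P. (\<forall>x y. P (x + y) = P x + P y) \<and>
         (\<forall>a y. P (smul a y) = smul a (P y)) \<and>
         (\<exists>K. \<forall>y. norm (P y) \<le> K * norm y) \<and>
         (\<forall>y. P y \<in> V) \<and> (\<forall>v\<in>V. P v = v)}"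

definition rel_proj_const :: "(complex \<Rightarrow> 'b::banach \<Rightarrow> 'b) \<Rightarrow> 'b set \<Rightarrow> real" where
  "rel_proj_const smul V = Inf (onorm ` projections_onto smul V)"

end

theory Submission
  imports Defs
begin

definition hb_good :: "real \<Rightarrow> ('b::real_normed_vector \<times> real) set \<Rightarrow> ('b \<times> real) set \<Rightarrow> bool" where
  "hb_good C G0 G \<longleftrightarrow> G0 \<subseteq> G \<and>
     (\<forall>x a y b. (x,a)\<in>G \<longrightarrow> (y,b)\<in>G \<longrightarrow> (x+y, a+b) \<in> G) \<and>
     (\<forall>x a r. (x,a)\<in>G \<longrightarrow> (r *\<^sub>R x, r*a) \<in> G) \<and>
     (\<forall>x a. (x,a)\<in>G \<longrightarrow> a \<le> C * norm x)"

lemma hb_goodD: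
  assumes "hb_good C G0 G"
  shows "G0 \<subseteq> G" "\<And>x a y b. (x,a)\<in>G \<Longrightarrow> (y,b)\<in>G \<Longrightarrow> (x+y, a+b) \<in> G"
    "\<And>x a r. (x,a)\<in>G \<Longrightarrow> (r *\<^sub>R x, r*a) \<in> G"
    "\<And>x a. (x,a)\<in>G \<Longrightarrow> a \<le> C * norm x"
  using assms unfolding hb_good_def by blast+

lemma hb_good_fun:
  assumes "hb_good C G0 G" "(x,a)\<in>G" "(x,b)\<in>G"
  shows "a = b"
proof -
  have "(x + (-1) *\<^sub>R x, a + (-1)*b) \<in> G" "(x + (-1) *\<^sub>R x, b + (-1)*a) \<in> G"
    using assms unfolding hb_good_def by blast+
  hence "a - b \<le> 0" "b - a \<le> 0" using assms(1) unfolding hb_good_def by force+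
  thus ?thesis by simp
qed

lemma hb_chain:
  assumes "Ch \<in> chains {G. hb_good C G0 G}" "Ch \<noteq> {}"
  shows "hb_good C G0 (\<Union>Ch)"
proof -
  have sub: "Ch \<subseteq> {G. hb_good C G0 G}" using assms(1) by (rule chainsD2)
  hence gX: "hb_good C G0 X" if "X \<in> Ch" for X using that by blast
  show ?thesis unfolding hb_good_def
  proof (intro conjI allI impI)
    obtain X where "X \<in> Ch" using assms(2) by blast
    thus "G0 \<subseteq> \<Union>Ch" using hb_goodD(1)[OF gX] by blast
  next
    fix x a y b assume h: "(x,a) \<in> \<Union>Ch" "(y,b) \<in> \<Union>Ch"
    then obtain X Y where XY: "X\<in>Ch" "Y\<in>Ch" "(x,a)\<in>X" "(y,b)\<in>Y" by blast
    from chainsD[OF assms(1) XY(1,2)] show "(x+y, a+b) \<in> \<Union>Ch"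
    proof
      assume "X \<subseteq> Y" thus ?thesis using XY hb_goodD(2)[OF gX[OF XY(2)], of x a y b] by blast
    next
      assume "Y \<subseteq> X" thus ?thesis using XY hb_goodD(2)[OF gX[OF XY(1)], of x a y b] by blast
    qed
  next
    fix x a r assume "(x,a) \<in> \<Union>Ch"
    then obtain X where "X\<in>Ch" "(x,a)\<in>X" by blast
    thus "(r *\<^sub>R x, r*a) \<in> \<Union>Ch" using hb_goodD(3)[OF gX] by blast
  next
    fix x a assume "(x,a) \<in> \<Union>Ch"
    then obtain X where "X\<in>Ch" "(x,a)\<in>X" by blast
    thus "a \<le> C * norm x" using hb_goodD(4)[OF gX] by blast
  qed
qed

lemma hb_extend:
  assumes good: "hb_good C G0 M" and C: "0 \<le> C" and z: "(0,0) \<in> M"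
    and y: "\<forall>a. (y,a) \<notin> M"
  shows "\<exists>G'. hb_good C G0 G' \<and> M \<subseteq> G' \<and> G' \<noteq> M"
proof -
  have addM: "\<And>x a y b. (x,a)\<in>M \<Longrightarrow> (y,b)\<in>M \<Longrightarrow> (x+y, a+b) \<in> M"
    and sclM: "\<And>x a r. (x,a)\<in>M \<Longrightarrow> (r *\<^sub>R x, r*a) \<in> M"
    and domM: "\<And>x a. (x,a)\<in>M \<Longrightarrow> a \<le> C * norm x"
    and G0M: "G0 \<subseteq> M"
    using hb_goodD[OF good] by blast+
  define L where "L = {a - C * norm (x - y) | x a. (x,a)\<in>M}"
  have key: "a - C * norm (x - y) \<le> C * norm (x' + y) - b" if "(x,a)\<in>M" "(x',b)\<in>M" for x a x' b
  proof -
    have "a + b \<le> C * norm (x + x')" using domM[OF addM[OF that]] .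
    also have "norm (x + x') \<le> norm (x - y) + norm (x' + y)"
      using norm_triangle_ineq[of "x - y" "x' + y"] by simp
    hence "C * norm (x + x') \<le> C * norm (x - y) + C * norm (x' + y)"
      using C by (metis distrib_left mult_left_mono)
    finally show ?thesis by simp
  qed
  define c where "c = Sup L"
  have Lne: "L \<noteq> {}" using z unfolding L_def by blast
  have Lbdd: "bdd_above L" unfolding L_def bdd_above_def
    using key[OF _ z] by auto
  have c_lo: "a - C * norm (x - y) \<le> c" if "(x,a)\<in>M" for x a
    unfolding c_def by (rule cSup_upper[OF _ Lbdd]) (use that L_def in blast)
  have c_hi: "c \<le> C * norm (x' + y) - b" if "(x',b)\<in>M" for x' b
    unfolding c_def by (rule cSup_least[OF Lne]) (use key that L_def in blast)
  define G' where "G' = {(x + t *\<^sub>R y, a + t*c) | x a t. (x,a)\<in>M}"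
  have MG': "M \<subseteq> G'"
  proof
    fix p assume "p \<in> M"
    then obtain x a where "p = (x,a)" "(x,a)\<in>M" by (cases p) auto
    moreover have "(x + 0 *\<^sub>R y, a + 0 * c) \<in> G'" unfolding G'_def
      by (rule CollectI, rule exI[of _ x], rule exI[of _ a], rule exI[of _ 0]) (simp add: \<open>(x,a)\<in>M\<close>)
    ultimately show "p \<in> G'" by simp
  qed
  have yG': "(y, c) \<in> G'" unfolding G'_def
    by (rule CollectI, rule exI[of _ 0], rule exI[of _ 0], rule exI[of _ 1]) (simp add: z)
  have "hb_good C G0 G'" unfolding hb_good_def
  proof (intro conjI allI impI)
    show "G0 \<subseteq> G'" using G0M MG' by blast
  next
    fix x a x' b assume "(x,a) \<in> G'" "(x',b) \<in> G'"
    then obtain x1 a1 t1 x2 a2 t2 where h: "(x1,a1)\<in>M" "(x2,a2)\<in>M"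
      "x = x1 + t1 *\<^sub>R y" "a = a1 + t1 * c" "x' = x2 + t2 *\<^sub>R y" "b = a2 + t2 * c"
      unfolding G'_def by blast
    have "x + x' = (x1 + x2) + (t1 + t2) *\<^sub>R y" "a + b = (a1 + a2) + (t1+t2) * c"
      using h by (auto simp: algebra_simps)
    thus "(x + x', a + b) \<in> G'" unfolding G'_def
      by (intro CollectI exI[of _ "x1+x2"] exI[of _ "a1+a2"] exI[of _ "t1+t2"]) (simp add: addM[OF h(1,2)])
  next
    fix x a r assume "(x,a) \<in> G'"
    then obtain x1 a1 t1 where h: "(x1,a1)\<in>M" "x = x1 + t1 *\<^sub>R y" "a = a1 + t1 * c"
      unfolding G'_def by blast
    have "r *\<^sub>R x = r *\<^sub>R x1 + (r*t1) *\<^sub>R y" "r * a = r * a1 + (r*t1) * c"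
      using h by (auto simp: algebra_simps)
    thus "(r *\<^sub>R x, r * a) \<in> G'" unfolding G'_def
      by (intro CollectI exI[of _ "r *\<^sub>R x1"] exI[of _ "r*a1"] exI[of _ "r*t1"]) (simp add: sclM[OF h(1)])
  next
    fix x a assume "(x,a) \<in> G'"
    then obtain x1 a1 t where h: "(x1,a1)\<in>M" "x = x1 + t *\<^sub>R y" "a = a1 + t * c"
      unfolding G'_def by blast
    consider "t = 0" | "t > 0" | "t < 0" by linarith
    thus "a \<le> C * norm x"
    proof cases
      case 1 thus ?thesis using h domM by simp
    next
      case 2
      have m: "((1/t) *\<^sub>R x1, (1/t)*a1) \<in> M" using sclM[OF h(1)] .
      have "c \<le> C * norm ((1/t) *\<^sub>R x1 + y) - (1/t)*a1" using c_hi[OF m] .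
      hence "t * c \<le> t * (C * norm ((1/t) *\<^sub>R x1 + y) - (1/t)*a1)"
        using 2 by (simp add: mult_left_mono)
      also have "(1/t) *\<^sub>R x1 + y = (1/t) *\<^sub>R (x1 + t *\<^sub>R y)" using 2 by (simp add: algebra_simps)
      also have "t * (C * norm ((1/t) *\<^sub>R (x1 + t *\<^sub>R y)) - (1/t)*a1) = t * (C * ((1/t) * norm x) - (1/t)*a1)"
        using 2 h(2) by simp
      also have "\<dots> = C * norm x - a1"
        using 2 by (simp add: field_simps)
      finally show ?thesis using h(3) by simp
    next
      case 3
      define s where "s = -t"
      have s: "s > 0" using 3 s_def by simp
      have m: "((1/s) *\<^sub>R x1, (1/s)*a1) \<in> M" using sclM[OF h(1)] .
      have "(1/s)*a1 - C * norm ((1/s) *\<^sub>R x1 - y) \<le> c" using c_lo[OF m] .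
      hence "s * ((1/s)*a1 - C * norm ((1/s) *\<^sub>R x1 - y)) \<le> s * c"
        using s by (simp add: mult_left_mono)
      also have "(1/s) *\<^sub>R x1 - y = (1/s) *\<^sub>R (x1 + t *\<^sub>R y)" using s s_def by (simp add: algebra_simps)
      also have "s * ((1/s)*a1 - C * norm ((1/s) *\<^sub>R (x1 + t *\<^sub>R y))) = s * ((1/s)*a1 - C * ((1/s) * norm x))"
        using s h(2) by simp
      also have "\<dots> = a1 - C * norm x"
        using s by (simp add: field_simps)
      finally show ?thesis using h(3) s_def by simp
    qed
  qed
  moreover have "G' \<noteq> M" using yG' y by blast
  ultimately show ?thesis using MG' by blast
qed

lemma real_hahn_banach:
  fixes G0 :: "('b::real_normed_vector \<times> real) set" and C :: real
  assumes C: "0 \<le> C" and z0: "(0,0) \<in> G0"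
    and add: "\<And>x a y b. (x,a)\<in>G0 \<Longrightarrow> (y,b)\<in>G0 \<Longrightarrow> (x+y, a+b) \<in> G0"
    and scl: "\<And>x a r. (x,a)\<in>G0 \<Longrightarrow> (r *\<^sub>R x, r*a) \<in> G0"
    and dom: "\<And>x a. (x,a)\<in>G0 \<Longrightarrow> a \<le> C * norm x"
  shows "\<exists>F. (\<forall>x y. F (x+y) = F x + F y) \<and> (\<forall>r x. F (r *\<^sub>R x) = r * F x) \<and>
             (\<forall>x. F x \<le> C * norm x) \<and> (\<forall>x a. (x,a)\<in>G0 \<longrightarrow> F x = a)"
proof -
  have g0: "hb_good C G0 G0" unfolding hb_good_def using add scl dom by (intro conjI allI impI) auto
  have "\<forall>Ch\<in>chains {G. hb_good C G0 G}. \<exists>U\<in>{G. hb_good C G0 G}. \<forall>X\<in>Ch. X \<subseteq> U"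
  proof
    fix Ch assume Ch: "Ch \<in> chains {G. hb_good C G0 G}"
    show "\<exists>U\<in>{G. hb_good C G0 G}. \<forall>X\<in>Ch. X \<subseteq> U"
    proof (cases "Ch = {}")
      case True thus ?thesis using g0 by blast
    next
      case False thus ?thesis using hb_chain[OF Ch False] by blast
    qed
  qed
  from Zorn_Lemma2[OF this] obtain M where M: "hb_good C G0 M"
    and max: "\<And>X. hb_good C G0 X \<Longrightarrow> M \<subseteq> X \<Longrightarrow> X = M" by blast
  have zM: "(0,0) \<in> M" using hb_goodD(1)[OF M] z0 by blast
  have tot: "\<exists>a. (y,a) \<in> M" for y
  proof (rule ccontr)
    assume "\<not> ?thesis"
    then obtain G' where "hb_good C G0 G'" "M \<subseteq> G'" "G' \<noteq> M"
      using hb_extend[OF M C zM] by blast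
    thus False using max by blast
  qed
  define F where "F y = (SOME a. (y,a) \<in> M)" for y
  have FM: "(y, F y) \<in> M" for y unfolding F_def using tot[of y] by (rule someI_ex)
  have Fe: "F y = a" if "(y,a)\<in>M" for y a using hb_good_fun[OF M FM that] .
  have addM: "\<And>x a y b. (x,a)\<in>M \<Longrightarrow> (y,b)\<in>M \<Longrightarrow> (x+y, a+b) \<in> M"
    and sclM: "\<And>x a r. (x,a)\<in>M \<Longrightarrow> (r *\<^sub>R x, r*a) \<in> M"
    and domM: "\<And>x a. (x,a)\<in>M \<Longrightarrow> a \<le> C * norm x"
    and G0M: "G0 \<subseteq> M"
    using hb_goodD[OF M] by blast+
  show ?thesis
  proof (intro exI[of _ F] conjI allI impI)
    fix x y show "F (x+y) = F x + F y"
      using Fe[OF addM[OF FM[of x] FM[of y]]] .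
  next
    fix r x show "F (r *\<^sub>R x) = r * F x" using Fe[OF sclM[OF FM[of x]]] .
  next
    fix x show "F x \<le> C * norm x" using domM[OF FM[of x]] .
  next
    fix x a assume "(x,a)\<in>G0" thus "F x = a" using Fe G0M by blast
  qed
qed


lemma ln_props:
  assumes "is_lattice_norm N"
  shows "\<And>z. N z = 0 \<longleftrightarrow> z = (\<lambda>_. 0)"
    "\<And>c z. N (\<lambda>i. c * z i) = cmod c * N z"
    "\<And>z w. N (\<lambda>i. z i + w i) \<le> N z + N w"
    "\<And>z w. (\<forall>k. cmod (z k) \<le> cmod (w k)) \<Longrightarrow> N z \<le> N w"
  using assms unfolding is_lattice_norm_def by blast+

lemma ln_nonneg:
  assumes N: "is_lattice_norm N" shows "0 \<le> N z"
proof -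
  have "N (\<lambda>i. z i + (-1) * z i) \<le> N z + N (\<lambda>i. (-1) * z i)" by (rule ln_props(3)[OF N])
  also have "N (\<lambda>i. (-1) * z i) = N z" using ln_props(2)[OF N, of "-1" z] by simp
  also have "(\<lambda>i. z i + (-1) * z i) = (\<lambda>_. 0)" by auto
  also have "N (\<lambda>_. 0) = 0" using ln_props(1)[OF N] by blast
  finally show ?thesis by simp
qed

lemma ln_coord:
  assumes N: "is_lattice_norm N"
  shows "\<exists>R. \<forall>z. N z < 1 \<longrightarrow> (\<forall>k. cmod (z k) \<le> R)"
proof -
  define e where "e k = (\<lambda>i. if i = k then 1 else 0 :: complex)" for k :: 'a
  have epos: "N (e k) > 0" for k
  proof -
    have "e k \<noteq> (\<lambda>_. 0)" unfolding e_def by (metis zero_neq_one)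
    hence "N (e k) \<noteq> 0" using ln_props(1)[OF N] by blast
    thus ?thesis using ln_nonneg[OF N, of "e k"] by linarith
  qed
  define R where "R = (\<Sum>k\<in>UNIV. 1 / N (e k))"
  have "cmod (z k) \<le> R" if "N z < 1" for z k
  proof -
    have "N (\<lambda>i. z k * e k i) \<le> N z"
      by (rule ln_props(4)[OF N]) (auto simp: e_def)
    hence "cmod (z k) * N (e k) < 1" using that ln_props(2)[OF N, of "z k" "e k"] by simp
    hence "cmod (z k) < 1 / N (e k)" using epos[of k] by (simp add: field_simps)
    also have "1 / N (e k) \<le> R" unfolding R_def
      by (rule member_le_sum) (use epos in \<open>auto intro: less_imp_le\<close>)
    finally show ?thesis by simp
  qed
  thus ?thesis by blast
qed

lemma mono_pow_bound:
  assumes "\<forall>k. cmod (z k) \<le> R"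
  shows "cmod (mono_pow z \<alpha>) \<le> (\<Prod>k\<in>UNIV. R ^ \<alpha> k)"
proof -
  have "cmod (mono_pow z \<alpha>) \<le> (\<Prod>k\<in>UNIV. cmod (z k ^ \<alpha> k))"
    unfolding mono_pow_def by (rule norm_prod_le)
  also have "\<dots> \<le> (\<Prod>k\<in>UNIV. R ^ \<alpha> k)"
    by (rule prod_mono) (use assms in \<open>auto simp: norm_power intro: power_mono\<close>)
  finally show ?thesis .
qed

lemma zero_in_ball:
  assumes N: "is_lattice_norm N" shows "(\<lambda>_. 0) \<in> unit_ball N"
  using ln_props(1)[OF N, of "\<lambda>_. 0"] unfolding unit_ball_def by simp

lemma ball_bdd:
  assumes N: "is_lattice_norm N" and J: "finite J" and b: "\<And>\<alpha>. 0 \<le> b \<alpha>"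
  shows "bdd_above ((\<lambda>z. \<Sum>\<alpha>\<in>J. b \<alpha> * cmod (mono_pow z \<alpha>)) ` unit_ball N)"
proof -
  obtain R where R: "\<And>z k. N z < 1 \<Longrightarrow> cmod (z k) \<le> R" using ln_coord[OF N] by blast
  have "(\<Sum>\<alpha>\<in>J. b \<alpha> * cmod (mono_pow z \<alpha>)) \<le> (\<Sum>\<alpha>\<in>J. b \<alpha> * (\<Prod>k\<in>UNIV. R ^ \<alpha> k))"
    if "z \<in> unit_ball N" for z
    using that by (intro sum_mono mult_left_mono mono_pow_bound) (auto simp: unit_ball_def R b)
  thus ?thesis by (intro bdd_aboveI2) blast
qed

lemma bdd_above_dom:
  assumes "bdd_above (g ` A)" "\<And>x. x \<in> A \<Longrightarrow> f x \<le> g x"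
  shows "bdd_above (f ` A)"
proof -
  from assms(1) obtain M where "\<forall>x\<in>A. g x \<le> M" by (auto simp: bdd_above_def)
  thus ?thesis using assms(2) by (intro bdd_aboveI2[where M=M]) (meson order_trans)
qed

lemma poly_bdd:
  assumes N: "is_lattice_norm N" and J: "finite J"
  shows "bdd_above ((\<lambda>z. cmod (\<Sum>\<alpha>\<in>J. c \<alpha> * mono_pow z \<alpha>)) ` unit_ball N)"
proof (rule bdd_above_dom[OF ball_bdd[OF N J, of "\<lambda>\<alpha>. cmod (c \<alpha>)"]])
  fix z show "cmod (\<Sum>\<alpha>\<in>J. c \<alpha> * mono_pow z \<alpha>) \<le> (\<Sum>\<alpha>\<in>J. cmod (c \<alpha>) * cmod (mono_pow z \<alpha>))"
    by (metis (no_types, lifting) norm_mult norm_sum sum.cong)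
qed simp

lemma mono_bdd:
  assumes N: "is_lattice_norm N"
  shows "bdd_above ((\<lambda>z. cmod (mono_pow z \<alpha>)) ` unit_ball N)"
  using ball_bdd[OF N, of "{\<alpha>}" "\<lambda>_. 1"] by simp

lemma S_pos:
  assumes N: "is_lattice_norm N"
  shows "0 < (SUP z\<in>unit_ball N. cmod (mono_pow z \<alpha>))"
proof -
  define r where "r = 1 / (N (\<lambda>_. 1) + 1)"
  have N1: "0 \<le> N (\<lambda>_. 1)" by (rule ln_nonneg[OF N])
  have r: "0 < r" "r * N (\<lambda>_. 1) < 1" unfolding r_def using N1 by (auto simp: field_simps)
  define z where "z = (\<lambda>_::'a. complex_of_real r)"
  have "N z = N (\<lambda>i. complex_of_real r * (\<lambda>_. 1) i)" unfolding z_def by simp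
  also have "\<dots> = r * N (\<lambda>_. 1)" using ln_props(2)[OF N, of "complex_of_real r" "\<lambda>_. 1"] r by simp
  finally have zb: "z \<in> unit_ball N" using r unfolding unit_ball_def by simp
  have "mono_pow z \<alpha> \<noteq> 0" unfolding mono_pow_def z_def using r by simp
  hence "0 < cmod (mono_pow z \<alpha>)" by simp
  also have "\<dots> \<le> (SUP z\<in>unit_ball N. cmod (mono_pow z \<alpha>))"
    by (rule cSUP_upper[OF zb mono_bdd[OF N]])
  finally show ?thesis .
qed

lemma cX_pos: assumes N: "is_lattice_norm N" shows "0 < cX N \<alpha>"
  unfolding cX_def using S_pos[OF N] by simp

lemma pn_nonneg:
  assumes N: "is_lattice_norm N" and J: "finite J"
  shows "0 \<le> poly_norm N J c"
  unfolding poly_norm_def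
  by (rule order_trans[OF norm_ge_zero cSUP_upper[OF zero_in_ball[OF N] poly_bdd[OF N J]]])


lemma cis_pow_eq_1:
  assumes M: "M > 0"
  shows "cis (2*pi / real M) ^ m = 1 \<longleftrightarrow> M dvd m"
proof
  assume h: "cis (2*pi / real M) ^ m = 1"
  have "cis (real m * (2*pi / real M)) = 1" using h by (metis Complex.DeMoivre)
  hence "cos (real m * (2*pi / real M)) = 1" by (metis cis.sel(1) one_complex.sel(1))
  then obtain k :: int where k: "real m * (2*pi / real M) = real_of_int k * 2 * pi"
    by (auto simp: cos_one_2pi_int)
  hence "real m = real_of_int k * real M" using M by (simp add: field_simps)
  hence "int m = k * int M" by (metis of_int_eq_iff of_int_mult of_int_of_nat_eq)
  hence "int M dvd int m" by simp
  thus "M dvd m" by simp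
next
  assume "M dvd m"
  then obtain q where q: "m = M * q" by blast
  have "cis (2*pi / real M) ^ m = (cis (2*pi / real M) ^ M) ^ q" by (simp add: q power_mult)
  also have "cis (2*pi / real M) ^ M = cis (2*pi)" using M by (simp add: Complex.DeMoivre)
  also have "cis (2*pi) = 1" by (simp add: complex_eq_iff)
  finally show "cis (2*pi / real M) ^ m = 1" by simp
qed

lemma geo_roots:
  assumes M: "M > 0"
  shows "(\<Sum>t<M. cis (2*pi / real M) ^ (t*m)) = (if M dvd m then of_nat M else 0)"
proof -
  define \<omega> where "\<omega> = cis (2*pi / real M)"
  have eq: "\<omega> ^ m = 1 \<longleftrightarrow> M dvd m" for m unfolding \<omega>_def by (rule cis_pow_eq_1[OF M])
  have rw: "\<omega> ^ (t*m) = (\<omega>^m)^t" for t by (simp add: power_mult mult.commute)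
  show ?thesis
  proof (cases "M dvd m")
    case True thus ?thesis using eq[of m] by (simp add: rw \<omega>_def[symmetric])
  next
    case False
    have "(\<Sum>t<M. \<omega> ^ (t*m)) = (\<Sum>t<M. (\<omega>^m)^t)" by (simp add: rw)
    also have "\<dots> = ((\<omega>^m)^M - 1) / (\<omega>^m - 1)" using eq[of m] False by (subst geometric_sum) auto
    also have "(\<omega>^m)^M = (\<omega>^M)^m" by (simp add: power_mult[symmetric] mult.commute)
    also have "\<omega>^M = 1" using eq[of M] by simp
    finally show ?thesis using False by (simp add: \<omega>_def)
  qed
qed

lemma dvd_shift:
  fixes a b M :: nat
  assumes "b < M" "a < M"
  shows "M dvd (b + (M - 1) * a) \<longleftrightarrow> b = a"
proof
  assume h: "M dvd (b + (M - 1) * a)"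
  have e: "(M - 1) * a + a = M * a" using assms by (cases M) auto
  have "int (b + (M - 1) * a) + int a = int b + int M * int a" using e
    by (metis of_nat_add of_nat_mult add.assoc)
  hence "int (b + (M - 1) * a) = (int b - int a) + int M * int a" by linarith
  hence "int M dvd (int b - int a) + int M * int a" using h by (metis of_nat_dvd_iff)
  hence d: "int M dvd (int b - int a)" by (simp add: dvd_add_left_iff)
  show "b = a"
  proof (rule ccontr)
    assume "b \<noteq> a"
    hence "int b - int a \<noteq> 0" by simp
    from dvd_imp_le_int[OF this d] assms show False by linarith
  qed
next
  assume "b = a"
  hence "b + (M - 1) * a = M * a" using assms by (cases M) auto
  thus "M dvd (b + (M - 1) * a)" by simp
qed

lemma cauchy_est:
  fixes N :: "('n::finite \<Rightarrow> complex) \<Rightarrow> real"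
  assumes N: "is_lattice_norm N" and J: "finite J" and aJ: "\<alpha> \<in> J" and z: "z \<in> unit_ball N"
  shows "cmod (c \<alpha>) * cmod (mono_pow z \<alpha>) \<le> poly_norm N J c"
proof -
  define D where "D = (\<Sum>\<beta>\<in>J. \<Sum>k\<in>UNIV. \<beta> k)"
  have Dle: "\<beta> k \<le> D" if "\<beta> \<in> J" for \<beta> k
  proof -
    have "\<beta> k \<le> (\<Sum>k\<in>UNIV. \<beta> k)" by (rule member_le_sum) auto
    also have "\<dots> \<le> D" unfolding D_def by (rule member_le_sum[OF that]) (use J in auto)
    finally show ?thesis .
  qed
  define M where "M = Suc D"
  have M0: "M > 0" unfolding M_def by simp
  define \<omega> where "\<omega> = cis (2*pi / real M)"
  have om1: "cmod \<omega> = 1" unfolding \<omega>_def by simp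
  define T where "T = PiE (UNIV::'n set) (\<lambda>_. {..<M})"
  define w where "w j = (\<lambda>k. \<omega> ^ (j k) * z k)" for j :: "'n \<Rightarrow> nat"
  define p where "p v = (\<Sum>\<beta>\<in>J. c \<beta> * mono_pow v \<beta>)" for v
  define wt where "wt j = (\<Prod>k\<in>UNIV. \<omega> ^ (j k * ((M-1) * \<alpha> k)))" for j :: "'n \<Rightarrow> nat"
  have wball: "w j \<in> unit_ball N" for j
  proof -
    have "N (w j) \<le> N z" by (rule ln_props(4)[OF N]) (simp add: w_def norm_mult norm_power om1)
    thus ?thesis using z unfolding unit_ball_def by simp
  qed
  have pbound: "cmod (p (w j)) \<le> poly_norm N J c" for j
    unfolding poly_norm_def p_def by (rule cSUP_upper[OF wball poly_bdd[OF N J]])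
  have wtn: "cmod (wt j) = 1" for j unfolding wt_def by (simp add: prod_norm[symmetric] norm_power om1)
  have mp: "mono_pow (w j) \<beta> * wt j = mono_pow z \<beta> * (\<Prod>k\<in>UNIV. \<omega> ^ (j k * (\<beta> k + (M-1)*\<alpha> k)))" for j \<beta>
    unfolding mono_pow_def w_def wt_def
    by (simp add: power_mult_distrib prod.distrib[symmetric] power_add power_mult[symmetric]
        algebra_simps mult.commute)
  have inner: "(\<Sum>j\<in>T. \<Prod>k\<in>UNIV. \<omega> ^ (j k * (\<beta> k + (M-1)*\<alpha> k))) =
      (if \<beta> = \<alpha> then of_nat M ^ CARD('n) else 0)" if bJ: "\<beta> \<in> J" for \<beta>
  proof -
    have "(\<Sum>j\<in>T. \<Prod>k\<in>UNIV. \<omega> ^ (j k * (\<beta> k + (M-1)*\<alpha> k))) =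
          (\<Prod>k\<in>UNIV. \<Sum>t\<in>{..<M}. \<omega> ^ (t * (\<beta> k + (M-1)*\<alpha> k)))"
      unfolding T_def by (rule prod_sum_PiE[symmetric]) auto
    also have "\<dots> = (\<Prod>k\<in>UNIV. if \<beta> k = \<alpha> k then of_nat M else 0)"
    proof (rule prod.cong[OF refl])
      fix k
      have "\<beta> k < M" "\<alpha> k < M" using Dle[OF bJ] Dle[OF aJ] unfolding M_def by (auto simp: less_Suc_eq_le)
      thus "(\<Sum>t\<in>{..<M}. \<omega> ^ (t * (\<beta> k + (M-1)*\<alpha> k))) = (if \<beta> k = \<alpha> k then of_nat M else 0)"
        unfolding \<omega>_def using geo_roots[OF M0] dvd_shift by presburger
    qed
    also have "\<dots> = (if \<beta> = \<alpha> then of_nat M ^ CARD('n) else 0)"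
    proof (cases "\<beta> = \<alpha>")
      case True thus ?thesis by simp
    next
      case False
      then obtain k where "\<beta> k \<noteq> \<alpha> k" by auto
      thus ?thesis using False by (intro trans[OF prod_zero]) auto
    qed
    finally show ?thesis .
  qed
  have main: "(\<Sum>j\<in>T. p (w j) * wt j) = of_nat M ^ CARD('n) * (c \<alpha> * mono_pow z \<alpha>)"
  proof -
    have "(\<Sum>j\<in>T. p (w j) * wt j) = (\<Sum>j\<in>T. \<Sum>\<beta>\<in>J. c \<beta> * (mono_pow (w j) \<beta> * wt j))"
      unfolding p_def by (simp add: sum_distrib_right mult.assoc)
    also have "\<dots> = (\<Sum>j\<in>T. \<Sum>\<beta>\<in>J. c \<beta> * mono_pow z \<beta> * (\<Prod>k\<in>UNIV. \<omega> ^ (j k * (\<beta> k + (M-1)*\<alpha> k))))"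
      by (simp add: mp mult.assoc)
    also have "\<dots> = (\<Sum>\<beta>\<in>J. c \<beta> * mono_pow z \<beta> * (\<Sum>j\<in>T. \<Prod>k\<in>UNIV. \<omega> ^ (j k * (\<beta> k + (M-1)*\<alpha> k))))"
      by (subst sum.swap) (simp add: sum_distrib_left)
    also have "\<dots> = (\<Sum>\<beta>\<in>J. c \<beta> * mono_pow z \<beta> * (if \<beta> = \<alpha> then of_nat M ^ CARD('n) else 0))"
    proof (rule sum.cong[OF refl])
      fix \<beta> assume "\<beta> \<in> J"
      show "c \<beta> * mono_pow z \<beta> * (\<Sum>j\<in>T. \<Prod>k\<in>UNIV. \<omega> ^ (j k * (\<beta> k + (M-1)*\<alpha> k))) =
        c \<beta> * mono_pow z \<beta> * (if \<beta> = \<alpha> then of_nat M ^ CARD('n) else 0)"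
        by (simp only: inner[OF \<open>\<beta> \<in> J\<close>])
    qed
    also have "\<dots> = c \<alpha> * mono_pow z \<alpha> * of_nat M ^ CARD('n)"
      using J aJ by (simp add: if_distrib sum.delta cong: if_cong)
    finally show ?thesis by (simp add: mult.commute)
  qed
  have cardT: "card T = M ^ CARD('n)" unfolding T_def by (simp add: card_PiE)
  have "real M ^ CARD('n) * (cmod (c \<alpha>) * cmod (mono_pow z \<alpha>)) = cmod (\<Sum>j\<in>T. p (w j) * wt j)"
    by (simp add: main norm_mult norm_power)
  also have "\<dots> \<le> (\<Sum>j\<in>T. cmod (p (w j) * wt j))" by (rule norm_sum)
  also have "\<dots> \<le> (\<Sum>j\<in>T. poly_norm N J c)"
    by (rule sum_mono) (simp add: norm_mult wtn pbound)
  also have "\<dots> = real M ^ CARD('n) * poly_norm N J c" by (simp add: cardT)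
  finally show ?thesis using M0 by (simp add: mult_le_cancel_left_pos)
qed

lemma coeff_bound:
  fixes N :: "('n::finite \<Rightarrow> complex) \<Rightarrow> real"
  assumes N: "is_lattice_norm N" and J: "finite J" and aJ: "\<alpha> \<in> J"
  shows "cmod (c \<alpha>) \<le> cX N \<alpha> * poly_norm N J c"
proof (cases "c \<alpha> = 0")
  case True thus ?thesis using pn_nonneg[OF N J, of c] cX_pos[OF N, of \<alpha>]
    by (simp add: less_imp_le)
next
  case False
  define S where "S = (SUP z\<in>unit_ball N. cmod (mono_pow z \<alpha>))"
  have S: "0 < S" unfolding S_def by (rule S_pos[OF N])
  have "S \<le> poly_norm N J c / cmod (c \<alpha>)" unfolding S_def
  proof (rule cSUP_least)
    show "unit_ball N \<noteq> {}" using zero_in_ball[OF N] by blast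
  next
    fix z assume "z \<in> unit_ball N"
    from cauchy_est[OF N J aJ this, of c] False
    show "cmod (mono_pow z \<alpha>) \<le> poly_norm N J c / cmod (c \<alpha>)" by (simp add: field_simps)
  qed
  hence "cmod (c \<alpha>) * S \<le> poly_norm N J c" using False by (simp add: field_simps)
  thus ?thesis unfolding cX_def S_def[symmetric] using S by (simp add: field_simps)
qed


lemma cbs_props:
  assumes "complex_banach_structure smul"
  shows "\<And>r y. smul (complex_of_real r) y = r *\<^sub>R y"
    "\<And>a b y. smul (a * b) y = smul a (smul b y)"
    "\<And>a x y. smul a (x + y) = smul a x + smul a y"
    "\<And>a b y. smul (a + b) y = smul a y + smul b y"
    "\<And>a y. norm (smul a y) = cmod a * norm y"
  using assms unfolding complex_banach_structure_def by blast+

lemma iso_props: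
  assumes "isometric_embedding N J smul I"
  shows "\<And>c d. c \<in> PJ J \<Longrightarrow> d \<in> PJ J \<Longrightarrow> I (\<lambda>\<alpha>. c \<alpha> + d \<alpha>) = I c + I d"
    "\<And>a c. c \<in> PJ J \<Longrightarrow> I (\<lambda>\<alpha>. a * c \<alpha>) = smul a (I c)"
    "\<And>c. c \<in> PJ J \<Longrightarrow> norm (I c) = poly_norm N J c"
  using assms unfolding isometric_embedding_def by blast+

lemma PJ_add: "c \<in> PJ J \<Longrightarrow> d \<in> PJ J \<Longrightarrow> (\<lambda>\<alpha>. c \<alpha> + d \<alpha>) \<in> PJ J"
  and PJ_scl: "c \<in> PJ J \<Longrightarrow> (\<lambda>\<alpha>. a * c \<alpha>) \<in> PJ J"
  and PJ_zero: "(\<lambda>_. 0) \<in> PJ J"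
  unfolding PJ_def by auto

lemma functional_exists:
  fixes N :: "('n::finite \<Rightarrow> complex) \<Rightarrow> real"
    and smul :: "complex \<Rightarrow> 'b::banach \<Rightarrow> 'b"
  assumes N: "is_lattice_norm N" and J: "finite J" and S: "complex_banach_structure smul"
    and Iso: "isometric_embedding N J smul I" and aJ: "\<alpha> \<in> J"
  shows "\<exists>\<psi>. (\<forall>x y. \<psi> (x + y) = \<psi> x + \<psi> y) \<and> (\<forall>a y. \<psi> (smul a y) = a * \<psi> y) \<and>
             (\<forall>y. cmod (\<psi> y) \<le> cX N \<alpha> * norm y) \<and> (\<forall>c\<in>PJ J. \<psi> (I c) = c \<alpha>)"
proof -
  note s = cbs_props[OF S] and iso = iso_props[OF Iso]
  define C where "C = cX N \<alpha>"
  have C: "0 \<le> C" unfolding C_def using cX_pos[OF N] by (simp add: less_imp_le)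
  define G0 where "G0 = {(I c, Re (c \<alpha>)) | c. c \<in> PJ J}"
  have I0: "I (\<lambda>_. 0) = 0"
    using iso(1)[OF PJ_zero PJ_zero] by simp
  have "(0,0) \<in> G0" unfolding G0_def using I0 PJ_zero by force
  moreover have "(x + y, a + b) \<in> G0" if h: "(x,a) \<in> G0" "(y,b) \<in> G0" for x a y b
  proof -
    obtain c d where cd: "c \<in> PJ J" "d \<in> PJ J" "x = I c" "a = Re (c \<alpha>)" "y = I d" "b = Re (d \<alpha>)"
      using h unfolding G0_def by blast
    have "(x + y, a + b) = (I (\<lambda>\<beta>. c \<beta> + d \<beta>), Re ((\<lambda>\<beta>. c \<beta> + d \<beta>) \<alpha>))"
      using cd iso(1)[OF cd(1,2)] by simp
    thus ?thesis unfolding G0_def using PJ_add[OF cd(1,2)] by blast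
  qed
  moreover have "(r *\<^sub>R x, r * a) \<in> G0" if h: "(x,a) \<in> G0" for x a r
  proof -
    obtain c where cd: "c \<in> PJ J" "x = I c" "a = Re (c \<alpha>)"
      using h unfolding G0_def by blast
    have "(r *\<^sub>R x, r * a) = (I (\<lambda>\<beta>. complex_of_real r * c \<beta>), Re ((\<lambda>\<beta>. complex_of_real r * c \<beta>) \<alpha>))"
      using cd iso(2)[OF cd(1), of "complex_of_real r"] s(1) by simp
    thus ?thesis unfolding G0_def using PJ_scl[OF cd(1)] by blast
  qed
  moreover have "a \<le> C * norm x" if h: "(x,a) \<in> G0" for x a
  proof -
    obtain c where cd: "c \<in> PJ J" "x = I c" "a = Re (c \<alpha>)"
      using h unfolding G0_def by blast
    have "a \<le> cmod (c \<alpha>)" using cd by (simp add: complex_Re_le_cmod)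
    also have "\<dots> \<le> C * poly_norm N J c" unfolding C_def by (rule coeff_bound[OF N J aJ])
    finally show ?thesis using cd iso(3) by simp
  qed
  ultimately obtain F where Fadd: "\<And>x y. F (x+y) = F x + F y" and Fscl: "\<And>r x. F (r *\<^sub>R x) = r * F x"
    and Fb: "\<And>x. F x \<le> C * norm x" and FG: "\<And>x a. (x,a)\<in>G0 \<Longrightarrow> F x = a"
    using real_hahn_banach[OF C, of G0] by blast
  define \<psi> where "\<psi> y = complex_of_real (F y) - \<i> * complex_of_real (F (smul \<i> y))" for y
  have padd: "\<psi> (x + y) = \<psi> x + \<psi> y" for x y
    unfolding \<psi>_def s(3) Fadd by (simp add: algebra_simps)
  have ii: "smul \<i> (smul \<i> y) = (-1) *\<^sub>R y" for y
    using s(2)[of \<i> \<i> y] s(1)[of "-1" y] by simp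
  have pi: "\<psi> (smul \<i> y) = \<i> * \<psi> y" for y
    unfolding \<psi>_def ii Fscl by (simp add: algebra_simps)
  have sr: "smul \<i> (r *\<^sub>R y) = r *\<^sub>R smul \<i> y" for r y
  proof -
    have "smul \<i> (r *\<^sub>R y) = smul \<i> (smul (complex_of_real r) y)" by (simp add: s(1))
    also have "\<dots> = smul (complex_of_real r) (smul \<i> y)" by (simp add: s(2)[symmetric] mult.commute)
    finally show ?thesis by (simp add: s(1))
  qed
  have pr: "\<psi> (r *\<^sub>R y) = complex_of_real r * \<psi> y" for r y
    unfolding \<psi>_def sr Fscl by (simp add: algebra_simps)
  have psmul: "\<psi> (smul a y) = a * \<psi> y" for a y
  proof -
    have a: "a = complex_of_real (Re a) + \<i> * complex_of_real (Im a)" by (simp add: complex_eq_iff)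
    have "smul a y = Re a *\<^sub>R y + smul \<i> (Im a *\<^sub>R y)"
      by (subst a) (simp add: s(4) s(2) s(1))
    hence "\<psi> (smul a y) = complex_of_real (Re a) * \<psi> y + \<i> * (complex_of_real (Im a) * \<psi> y)"
      by (simp add: padd pr pi)
    also have "\<dots> = a * \<psi> y" by (subst (3) a) (simp add: algebra_simps)
    finally show ?thesis .
  qed
  have Repsi: "Re (\<psi> y) = F y" for y unfolding \<psi>_def by simp
  have pb: "cmod (\<psi> y) \<le> C * norm y" for y
  proof (cases "\<psi> y = 0")
    case True thus ?thesis using C by simp
  next
    case False
    define a where "a = cnj (\<psi> y) / complex_of_real (cmod (\<psi> y))"
    have ca: "cmod a = 1" unfolding a_def using False by (simp add: norm_divide)
    have "a * \<psi> y = complex_of_real (cmod (\<psi> y))" unfolding a_def using False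
      by (simp add: field_simps complex_norm_square[symmetric] power2_eq_square)
    hence "cmod (\<psi> y) = Re (\<psi> (smul a y))" by (simp add: psmul)
    also have "\<dots> = F (smul a y)" by (rule Repsi)
    also have "\<dots> \<le> C * norm (smul a y)" by (rule Fb)
    also have "\<dots> = C * norm y" by (simp add: s(5) ca)
    finally show ?thesis .
  qed
  have pext: "\<psi> (I c) = c \<alpha>" if c: "c \<in> PJ J" for c
  proof -
    have "(I c, Re (c \<alpha>)) \<in> G0" unfolding G0_def using c by blast
    hence 1: "F (I c) = Re (c \<alpha>)" by (rule FG)
    have "smul \<i> (I c) = I (\<lambda>\<beta>. \<i> * c \<beta>)" using iso(2)[OF c] by simp
    moreover have "(I (\<lambda>\<beta>. \<i> * c \<beta>), Re (\<i> * c \<alpha>)) \<in> G0" unfolding G0_def using PJ_scl[OF c] by blast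
    ultimately have 2: "F (smul \<i> (I c)) = - Im (c \<alpha>)" using FG by fastforce
    show ?thesis unfolding \<psi>_def 1 2 by (simp add: complex_eq_iff)
  qed
  show ?thesis unfolding C_def[symmetric] using padd psmul pb pext by blast
qed


theorem theorem2p18:
  fixes N :: "('n::finite \<Rightarrow> complex) \<Rightarrow> real"
    and J :: "('n \<Rightarrow> nat) set"
    and smul :: "complex \<Rightarrow> 'b::banach \<Rightarrow> 'b"
    and I :: "(('n \<Rightarrow> nat) \<Rightarrow> complex) \<Rightarrow> 'b"
  assumes "is_lattice_norm N"
    and "finite J"
    and "complex_banach_structure smul"
    and "isometric_embedding N J smul I"
  shows "rel_proj_const smul (I ` PJ J) \<le> lambda_hat N J"
proof -
  note N = assms(1) and J = assms(2) and S = assms(3) and Iso = assms(4)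
  note s = cbs_props[OF S] and iso = iso_props[OF Iso]
  have "\<forall>\<alpha>\<in>J. \<exists>\<psi>. (\<forall>x y. \<psi> (x + y) = \<psi> x + \<psi> y) \<and> (\<forall>a y. \<psi> (smul a y) = a * \<psi> y) \<and>
             (\<forall>y. cmod (\<psi> y) \<le> cX N \<alpha> * norm y) \<and> (\<forall>c\<in>PJ J. \<psi> (I c) = c \<alpha>)"
    using functional_exists[OF N J S Iso] by blast
  then obtain \<Psi> where \<Psi>: "\<And>\<alpha>. \<alpha> \<in> J \<Longrightarrow> (\<forall>x y. \<Psi> \<alpha> (x + y) = \<Psi> \<alpha> x + \<Psi> \<alpha> y) \<and>
      (\<forall>a y. \<Psi> \<alpha> (smul a y) = a * \<Psi> \<alpha> y) \<and>
      (\<forall>y. cmod (\<Psi> \<alpha> y) \<le> cX N \<alpha> * norm y) \<and> (\<forall>c\<in>PJ J. \<Psi> \<alpha> (I c) = c \<alpha>)"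
    by metis
  define co where "co y = (\<lambda>\<beta>. if \<beta> \<in> J then \<Psi> \<beta> y else 0)" for y
  define Q where "Q y = I (co y)" for y
  have coPJ: "co y \<in> PJ J" for y unfolding co_def PJ_def by auto
  have coadd: "co (x + y) = (\<lambda>\<beta>. co x \<beta> + co y \<beta>)" for x y
    unfolding co_def using \<Psi> by auto
  have cosmul: "co (smul a y) = (\<lambda>\<beta>. a * co y \<beta>)" for a y
    unfolding co_def using \<Psi> by auto
  define L where "L = lambda_hat N J"
  have bddL: "bdd_above ((\<lambda>z. \<Sum>\<alpha>\<in>J. cX N \<alpha> * cmod (mono_pow z \<alpha>)) ` unit_ball N)"
    by (rule ball_bdd[OF N J]) (simp add: cX_pos[OF N] less_imp_le)
  have L0: "0 \<le> L"
  proof -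
    have "0 \<le> (\<Sum>\<alpha>\<in>J. cX N \<alpha> * cmod (mono_pow (\<lambda>_. 0) \<alpha>))"
      by (intro sum_nonneg mult_nonneg_nonneg) (auto simp: cX_pos[OF N] less_imp_le)
    also have "\<dots> \<le> L" unfolding L_def lambda_hat_def
      by (rule cSUP_upper[OF zero_in_ball[OF N] bddL])
    finally show ?thesis .
  qed
  have Qb: "norm (Q y) \<le> L * norm y" for y
  proof -
    have "norm (Q y) = poly_norm N J (co y)" unfolding Q_def by (rule iso(3)[OF coPJ])
    also have "\<dots> \<le> L * norm y" unfolding poly_norm_def
    proof (rule cSUP_least)
      show "unit_ball N \<noteq> {}" using zero_in_ball[OF N] by blast
    next
      fix z assume z: "z \<in> unit_ball N"
      have "cmod (\<Sum>\<alpha>\<in>J. co y \<alpha> * mono_pow z \<alpha>) \<le> (\<Sum>\<alpha>\<in>J. cmod (co y \<alpha> * mono_pow z \<alpha>))"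
        by (rule norm_sum)
      also have "\<dots> \<le> (\<Sum>\<alpha>\<in>J. norm y * (cX N \<alpha> * cmod (mono_pow z \<alpha>)))"
      proof (rule sum_mono)
        fix \<alpha> assume a: "\<alpha> \<in> J"
        have "cmod (co y \<alpha> * mono_pow z \<alpha>) = cmod (\<Psi> \<alpha> y) * cmod (mono_pow z \<alpha>)"
          unfolding co_def using a by (simp add: norm_mult)
        also have "\<dots> \<le> (cX N \<alpha> * norm y) * cmod (mono_pow z \<alpha>)"
          using \<Psi>[OF a] by (intro mult_right_mono) auto
        finally show "cmod (co y \<alpha> * mono_pow z \<alpha>) \<le> norm y * (cX N \<alpha> * cmod (mono_pow z \<alpha>))"
          by (simp add: algebra_simps)
      qed
      also have "\<dots> = norm y * (\<Sum>\<alpha>\<in>J. cX N \<alpha> * cmod (mono_pow z \<alpha>))"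
        by (simp add: sum_distrib_left)
      also have "\<dots> \<le> norm y * L" unfolding L_def lambda_hat_def
        by (intro mult_left_mono cSUP_upper[OF z bddL]) simp
      finally show "cmod (\<Sum>\<alpha>\<in>J. co y \<alpha> * mono_pow z \<alpha>) \<le> L * norm y" by (simp add: mult.commute)
    qed
    finally show ?thesis .
  qed
  have Qproj: "Q \<in> projections_onto smul (I ` PJ J)"
    unfolding projections_onto_def
  proof (intro CollectI conjI allI ballI exI)
    fix x y show "Q (x + y) = Q x + Q y" unfolding Q_def coadd by (rule iso(1)[OF coPJ coPJ])
  next
    fix a y show "Q (smul a y) = smul a (Q y)" unfolding Q_def cosmul by (rule iso(2)[OF coPJ])
  next
    fix y show "norm (Q y) \<le> L * norm y" by (rule Qb)
  next
    fix y show "Q y \<in> I ` PJ J" unfolding Q_def using coPJ by blast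
  next
    fix v assume "v \<in> I ` PJ J"
    then obtain c where c: "c \<in> PJ J" "v = I c" by blast
    have "co (I c) = c" unfolding co_def using \<Psi> c(1) by (auto simp: PJ_def)
    thus "Q v = v" unfolding Q_def c(2) by simp
  qed
  have bl: "bounded_linear P" if "P \<in> projections_onto smul (I ` PJ J)" for P
  proof -
    from that obtain K where P: "\<And>x y. P (x + y) = P x + P y" "\<And>a y. P (smul a y) = smul a (P y)"
      "\<And>y. norm (P y) \<le> K * norm y" unfolding projections_onto_def by blast
    show ?thesis
    proof (rule bounded_linear_intro)
      show "P (x + y) = P x + P y" for x y by (rule P(1))
      show "P (r *\<^sub>R x) = r *\<^sub>R P x" for r x using P(2)[of "complex_of_real r" x] s(1) by simp
      show "norm (P x) \<le> norm x * K" for x using P(3)[of x] by (simp add: mult.commute)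
    qed
  qed
  have bdd: "bdd_below (onorm ` projections_onto smul (I ` PJ J))"
    by (rule bdd_belowI2[of _ 0]) (rule onorm_pos_le[OF bl])
  have "rel_proj_const smul (I ` PJ J) \<le> onorm Q"
    unfolding rel_proj_const_def by (rule cInf_lower[OF imageI[OF Qproj] bdd])
  also have "onorm Q \<le> L" by (rule onorm_bound[OF L0 Qb])
  finally show ?thesis unfolding L_def .
qed


end
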